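(* Let $G=(V,E)$ be an unweighted undirected graph, let $S\subseteq V$ be non-empty, let $u,v\in V$ and let $P(u,v)$ be a shortest path between $u$ and $v$ in $G$. If $P(u,v)$ is not contained in $G_S$, then $h_S(u)+h_S(v)\le d_G(u,v)+1$.
   Context: All edges have weight $1$. $d_G(u,v)$ is the shortest-path distance in $G$; $h_S(u)=\min_{s\in S}d_G(u,s)$. For $v\in V$, $E_S(v)$ is the set of edges incident to $v$ whose weight is at most $h_S(v)$; $E_S=\bigcup_{v\in V}E_S(v)$ and $G_S=(V,E_S)$. "$P(u,v)$ is contained in $G_S$" means every edge of $P(u,v)$ is in $E_S$. *)

theory Defs
  imports Main "HOL-Library.Extended_Nat"
begin

definition graph :: "'a set \<Rightarrow> 'a set set \<Rightarrow> bool" where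
  "graph V E \<longleftrightarrow> (\<forall>e\<in>E. \<exists>x y. e = {x, y} \<and> x \<noteq> y \<and> x \<in> V \<and> y \<in> V)"

definition weight :: "'a set \<Rightarrow> enat" where
  "weight e = 1"

definition is_path :: "'a set \<Rightarrow> 'a set set \<Rightarrow> 'a list \<Rightarrow> 'a \<Rightarrow> 'a \<Rightarrow> bool" where
  "is_path V F p u v \<longleftrightarrow> p \<noteq> [] \<and> hd p = u \<and> last p = v \<and> set p \<subseteq> V \<and>
     (\<forall>i. Suc i < length p \<longrightarrow> {p ! i, p ! Suc i} \<in> F)"

definition path_length :: "'a list \<Rightarrow> enat" where
  "path_length p = (\<Sum>i<length p - 1. weight {p ! i, p ! Suc i})"

definition dist :: "'a set \<Rightarrow> 'a set set \<Rightarrow> 'a \<Rightarrow> 'a \<Rightarrow> enat" where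
  "dist V E u v = (INF p \<in> {p. is_path V E p u v}. path_length p)"

definition is_shortest_path :: "'a set \<Rightarrow> 'a set set \<Rightarrow> 'a list \<Rightarrow> 'a \<Rightarrow> 'a \<Rightarrow> bool" where
  "is_shortest_path V E p u v \<longleftrightarrow> is_path V E p u v \<and> path_length p = dist V E u v"

definition hS :: "'a set \<Rightarrow> 'a set set \<Rightarrow> 'a set \<Rightarrow> 'a \<Rightarrow> enat" where
  "hS V E S u = (INF s \<in> S. dist V E u s)"

definition ES_at :: "'a set \<Rightarrow> 'a set set \<Rightarrow> 'a set \<Rightarrow> 'a \<Rightarrow> 'a set set" where
  "ES_at V E S v = {e \<in> E. v \<in> e \<and> weight e \<le> hS V E S v}"

definition ES :: "'a set \<Rightarrow> 'a set set \<Rightarrow> 'a set \<Rightarrow> 'a set set" where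
  "ES V E S = (\<Union>v\<in>V. ES_at V E S v)"

definition contained_in :: "'a list \<Rightarrow> 'a set set \<Rightarrow> bool" where
  "contained_in p F \<longleftrightarrow> (\<forall>i. Suc i < length p \<longrightarrow> {p ! i, p ! Suc i} \<in> F)"

end

theory Submission
  imports Defs
begin

lemma pl: "path_length p = enat (length p - 1)"
  by (simp add: path_length_def weight_def of_nat_eq_enat)

lemma dist_le: "is_path V E p x y \<Longrightarrow> dist V E x y \<le> path_length p"
  unfolding dist_def by (rule INF_lower) simp

lemma hS_le: "s \<in> S \<Longrightarrow> hS V E S x \<le> dist V E x s"
  unfolding hS_def by (rule INF_lower)

lemma inf_zero:
  fixes f :: "'b \<Rightarrow> enat"
  assumes "(INF x\<in>A. f x) < 1" shows "\<exists>x\<in>A. f x = 0"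
proof -
  have ne: "A \<noteq> {}" using assms by (auto simp: top_enat_def)
  have "(INF x\<in>A. f x) \<in> f ` A"
    using ne by (simp add: Inf_enat_def) (metis LeastI image_is_empty ex_in_conv)
  moreover have "(INF x\<in>A. f x) = 0" using assms
    by (metis enat_0_iff(1) iless_Suc_eq one_eSuc one_enat_def le_zero_eq ileI1 not_less)
  ultimately show ?thesis by auto
qed

lemma hS0:
  assumes "hS V E S a < 1" shows "a \<in> S"
proof -
  obtain s where s: "s \<in> S" "dist V E a s = 0"
    using inf_zero[OF assms[unfolded hS_def]] by auto
  then have "dist V E a s < 1" by simp
  then obtain p where p: "is_path V E p a s" "path_length p = 0"
    using inf_zero[of "path_length" "{p. is_path V E p a s}"] unfolding dist_def by auto
  then have "length p = 1" by (cases p) (auto simp: pl is_path_def zero_enat_def)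
  then have "hd p = last p" by (cases p) auto
  then show ?thesis using p s by (auto simp: is_path_def)
qed

lemma path_take:
  assumes "is_path V F p x y" "i < length p"
  shows "is_path V F (take (Suc i) p) x (p ! i)"
  using assms unfolding is_path_def
  by (auto simp: hd_take last_conv_nth dest: in_set_takeD)

lemma path_drop:
  assumes "is_path V F p x y" "i < length p"
  shows "is_path V F (drop i p) (p ! i) y"
  using assms unfolding is_path_def
  by (auto simp: hd_drop_conv_nth dest: in_set_dropD)

lemma path_rev:
  assumes "is_path V F p x y"
  shows "is_path V F (rev p) y x"
proof -
  have "{rev p ! j, rev p ! Suc j} \<in> F" if "Suc j < length p" for j
  proof -
    have "{p ! (length p - Suc (Suc j)), p ! Suc (length p - Suc (Suc j))} \<in> F"
      using assms that unfolding is_path_def by auto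
    moreover have "Suc (length p - Suc (Suc j)) = length p - Suc j" using that by simp
    ultimately show ?thesis using that by (simp add: rev_nth insert_commute)
  qed
  then show ?thesis using assms unfolding is_path_def by (auto simp: hd_rev last_rev)
qed

theorem lemma23:
  fixes V :: "'a set" and E :: "'a set set" and S :: "'a set" and u v :: 'a and P :: "'a list"
  assumes "graph V E"
    and "S \<subseteq> V" and "S \<noteq> {}"
    and "u \<in> V" and "v \<in> V"
    and "is_shortest_path V E P u v"
    and "\<not> contained_in P (ES V E S)"
  shows "hS V E S u + hS V E S v \<le> dist V E u v + 1"
proof -
  have P: "is_path V E P u v" and dP: "dist V E u v = enat (length P - 1)"
    using assms(6) by (auto simp: is_shortest_path_def pl)
  obtain i where i: "Suc i < length P" "{P ! i, P ! Suc i} \<notin> ES V E S"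
    using assms(7) unfolding contained_in_def by auto
  have e: "{P ! i, P ! Suc i} \<in> E" using P i(1) by (auto simp: is_path_def)
  have inV: "P ! i \<in> V" "P ! Suc i \<in> V" using P i(1) by (auto simp: is_path_def)
  have "hS V E S (P ! i) < 1"
  proof (rule ccontr)
    assume "\<not> ?thesis"
    then have "{P ! i, P ! Suc i} \<in> ES_at V E S (P ! i)"
      using e by (auto simp: ES_at_def weight_def)
    then show False using i(2) inV by (auto simp: ES_def)
  qed
  then have a: "P ! i \<in> S" by (rule hS0)
  have "hS V E S (P ! Suc i) < 1"
  proof (rule ccontr)
    assume "\<not> ?thesis"
    then have "{P ! i, P ! Suc i} \<in> ES_at V E S (P ! Suc i)"
      using e by (auto simp: ES_at_def weight_def)
    then show False using i(2) inV by (auto simp: ES_def)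
  qed
  then have b: "P ! Suc i \<in> S" by (rule hS0)
  have "hS V E S u \<le> dist V E u (P ! i)" using a by (rule hS_le)
  also have "\<dots> \<le> enat i"
    using dist_le[OF path_take[OF P, of i]] i(1) by (simp add: pl)
  finally have hu: "hS V E S u \<le> enat i" .
  have "hS V E S v \<le> dist V E v (P ! Suc i)" using b by (rule hS_le)
  also have "\<dots> \<le> enat (length P - Suc i - 1)"
    using dist_le[OF path_rev[OF path_drop[OF P i(1)]]] by (simp add: pl)
  finally have hv: "hS V E S v \<le> enat (length P - Suc i - 1)" .
  have "hS V E S u + hS V E S v \<le> enat i + enat (length P - Suc i - 1)"
    using hu hv by (rule add_mono)
  also have "\<dots> \<le> dist V E u v + 1" using i(1) by (simp add: dP one_enat_def)
  finally show ?thesis .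
qed

end
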